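(* There exists a function $f : \mathbb{N}^{\mathbb{N}} \to \mathbb{N}$ such that Player I has a winning strategy in $\Gamma(f)$, and $C \cap \{f \ge r\}$ is uncountable for each $r \in \mathbb{R}$ and each Cantor set $C \subseteq \mathbb{N}^{\mathbb{N}}$.
   Context: Here $X = \mathbb{N}^{\mathbb{N}}$ (the branches of the full tree of finite sequences of natural numbers) with the product topology. A Cantor set is a subset homeomorphic to the middle-thirds Cantor set. $\{f \ge r\} = \{x : f(x) \ge r\}$. The game $\Gamma(f)$: Player I and Player II alternate, Player I moving first; Player I plays natural numbers $x_0, x_1, \dots$, and after each move $x_t$ Player II plays a real number $v_t$. Player II wins the run iff $f(x_0,x_1,\dots) = \limsup_{t\to\infty} v_t$; otherwise Player I wins. *)

theory Defs
  imports "HOL-Analysis.Analysis"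
begin

fun cantor_stage :: "nat \<Rightarrow> real set" where
  "cantor_stage 0 = {0..1}"
| "cantor_stage (Suc n) =
     (\<lambda>x. x / 3) ` cantor_stage n \<union> (\<lambda>x. 2 / 3 + x / 3) ` cantor_stage n"

definition middle_thirds_cantor :: "real set" where
  "middle_thirds_cantor = (\<Inter>n. cantor_stage n)"

text \<open>A Cantor set in Baire space (product topology on nat => nat, nat discrete).\<close>
definition cantor_subset :: "(nat \<Rightarrow> nat) set \<Rightarrow> bool" where
  "cantor_subset C \<longleftrightarrow> C homeomorphic middle_thirds_cantor"

text \<open>A strategy for Player I maps the list of Player II's
  previous moves v_0..v_{t-1} to the next move x_t (Player I's own earlier
  moves are determined by these).\<close>
definition II_wins_run :: "((nat \<Rightarrow> nat) \<Rightarrow> real) \<Rightarrow> (nat \<Rightarrow> nat) \<Rightarrow> (nat \<Rightarrow> real) \<Rightarrow> bool" where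
  "II_wins_run f x v \<longleftrightarrow> ereal (f x) = limsup (\<lambda>t. ereal (v t))"

definition I_winning_strategy :: "((nat \<Rightarrow> nat) \<Rightarrow> real) \<Rightarrow> (real list \<Rightarrow> nat) \<Rightarrow> bool" where
  "I_winning_strategy f \<sigma> \<longleftrightarrow>
     (\<forall>v :: nat \<Rightarrow> real. \<not> II_wins_run f (\<lambda>t. \<sigma> (map v [0..<t])) v)"

definition I_has_winning_strategy :: "((nat \<Rightarrow> nat) \<Rightarrow> real) \<Rightarrow> bool" where
  "I_has_winning_strategy f \<longleftrightarrow> (\<exists>\<sigma>. I_winning_strategy f \<sigma>)"

end

theory Submission
  imports Defs
begin
unbundle cardinal_syntax




lemma inj_choice:
  fixes I :: "'i set" and K :: "'i \<Rightarrow> 'a set"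
  assumes big: "\<And>i. i \<in> I \<Longrightarrow> |I| \<le>o |K i|"
  shows "\<exists>x. inj_on x I \<and> (\<forall>i\<in>I. x i \<in> K i)"
proof -
  define r where "r = |I|"
  have CO: "Card_order r" and FI: "Field r = I" unfolding r_def
    using card_of_Card_order[of I] by (auto simp: Field_card_of)
  have WO: "Well_order r" using CO unfolding card_order_on_def by simp
  have wf: "wf (r - Id)" using WO unfolding well_order_on_def by simp
  have lin: "Linear_order r" using WO unfolding well_order_on_def by simp
  define H where "H = (\<lambda>(g::'i \<Rightarrow> 'a) i. SOME y. y \<in> K i \<and> y \<notin> g ` underS r i)"
  define x where "x = wfrec (r - Id) H"
  have cutimg: "cut g (r - Id) i ` underS r i = g ` underS r i" for g i
    unfolding cut_def underS_def by (auto intro!: image_cong)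
  have xeq: "x i = H x i" for i
    using wfrec[OF wf, of H i] unfolding x_def[symmetric] by (simp add: H_def cutimg)
  have key: "x i \<in> K i \<and> x i \<notin> x ` underS r i" if "i \<in> I" for i
  proof -
    have "|underS r i| <o r" using card_of_underS[OF CO] that FI by simp
    hence "|x ` underS r i| <o |I|" unfolding r_def
      using card_of_image ordLeq_ordLess_trans by blast
    hence lt: "|x ` underS r i| <o |K i|" using big[OF that] ordLess_ordLeq_trans by blast
    have "\<exists>y. y \<in> K i \<and> y \<notin> x ` underS r i"
    proof (rule ccontr)
      assume "\<not> ?thesis"
      hence "K i \<subseteq> x ` underS r i" by blast
      hence "|K i| \<le>o |x ` underS r i|" by (rule card_of_mono1)
      thus False using lt not_ordLess_ordLeq by blast
    qed
    hence "H x i \<in> K i \<and> H x i \<notin> x ` underS r i" unfolding H_def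
      by (rule someI_ex[where P="\<lambda>y. y \<in> K i \<and> y \<notin> x ` underS r i"])
    thus ?thesis using xeq[of i] by simp
  qed
  have "inj_on x I"
  proof (rule inj_onI)
    fix i j assume i: "i \<in> I" and j: "j \<in> I" and e: "x i = x j"
    show "i = j"
    proof (rule ccontr)
      assume ne: "i \<noteq> j"
      have "(i, j) \<in> r \<or> (j, i) \<in> r" using lin i j FI ne
        unfolding linear_order_on_def total_on_def by auto
      thus False
      proof
        assume "(i, j) \<in> r" hence "i \<in> underS r j" using ne by (simp add: underS_def)
        thus False using key[OF j] e by (metis image_eqI)
      next
        assume "(j, i) \<in> r" hence "j \<in> underS r i" using ne by (simp add: underS_def)
        thus False using key[OF i] e by (metis image_eqI)
      qed
    qed
  qed
  thus ?thesis using key by blast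
qed



lemma stage_compact: "compact (cantor_stage n)"
proof (induction n)
  case (Suc n)
  have c1: "continuous_on (cantor_stage n) (\<lambda>x::real. x / 3)" by (intro continuous_intros) auto
  have c2: "continuous_on (cantor_stage n) (\<lambda>x::real. 2/3 + x / 3)" by (intro continuous_intros) auto
  show ?case using compact_continuous_image[OF c1 Suc] compact_continuous_image[OF c2 Suc]
    by (simp add: compact_Un)
qed simp

lemma stage_sub: "cantor_stage n \<subseteq> {0..1}"
proof (induction n)
  case (Suc n)
  show ?case
  proof
    fix y assume "y \<in> cantor_stage (Suc n)"
    then obtain x where "x \<in> cantor_stage n" "y = x/3 \<or> y = 2/3 + x/3" by auto
    with Suc show "y \<in> {0..1}" by auto
  qed
qed simp

lemma mtc_compact: "compact middle_thirds_cantor"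
proof -
  have "closed middle_thirds_cantor" unfolding middle_thirds_cantor_def
    by (intro closed_INT ballI compact_imp_closed stage_compact)
  moreover have "bounded middle_thirds_cantor"
    unfolding middle_thirds_cantor_def
    by (rule bounded_subset[OF _ INT_lower[of 0]]) (auto simp del: cantor_stage.simps simp: stage_compact compact_imp_bounded)
  ultimately show ?thesis by (simp add: compact_eq_bounded_closed)
qed

definition tree :: "(nat \<Rightarrow> nat) set \<Rightarrow> nat list set" where
  "tree C = {map y [0..<n] | y n. y \<in> C}"

lemma closed_tree:
  fixes C :: "(nat \<Rightarrow> nat) set"
  assumes "closed C"
  shows "C = {x. \<forall>n. map x [0..<n] \<in> tree C}"
proof
  show "C \<subseteq> {x. \<forall>n. map x [0..<n] \<in> tree C}" unfolding tree_def by blast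
next
  show "{x. \<forall>n. map x [0..<n] \<in> tree C} \<subseteq> C"
  proof
    fix x assume "x \<in> {x. \<forall>n. map x [0..<n] \<in> tree C}"
    hence x: "\<forall>n. map x [0..<n] \<in> tree C" by simp
    have "\<exists>y\<in>C. map y [0..<n] = map x [0..<n]" for n
    proof -
      from x[rule_format, of n] obtain y na where "y \<in> C" "map x [0..<n] = map y [0..<na]"
        unfolding tree_def by blast
      moreover from this(2) have "n = na" by (metis length_map length_upt diff_zero)
      ultimately show ?thesis by auto
    qed
    then obtain y where y: "\<And>n. y n \<in> C" "\<And>n. map (y n) [0..<n] = map x [0..<n]"
      by metis
    have agree: "y n i = x i" if "i < n" for n i
      using y(2)[of n] that by (simp add: map_eq_conv)
    have "limitin (product_topology (\<lambda>i. euclidean) UNIV) y x sequentially"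
      unfolding limitin_componentwise
    proof (intro conjI ballI)
      fix i :: nat
      have "eventually (\<lambda>n. y n i = x i) sequentially"
        using agree by (intro eventually_sequentiallyI[of "Suc i"]) auto
      thus "limitin euclidean (\<lambda>c. y c i) (x i) sequentially"
        by (simp add: tendsto_eventually)
    qed (simp_all add: extensional_def)
    hence "y \<longlonglongrightarrow> x" by (simp add: euclidean_product_topology)
    thus "x \<in> C" using assms y(1) unfolding closed_sequential_limits by blast
  qed
qed

lemma H_nat: "Hausdorff_space (euclidean :: nat topology)"
  unfolding Hausdorff_space_def disjnt_def using hausdorff by fastforce
lemma closed_of_compact: "compact (C::(nat\<Rightarrow>nat) set) \<Longrightarrow> closed C"
proof -
  assume "compact C"
  hence "compactin euclidean C" by simp
  moreover have "Hausdorff_space (euclidean :: (nat\<Rightarrow>nat) topology)"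
    unfolding euclidean_product_topology[symmetric] Hausdorff_space_product_topology
    using H_nat by simp
  ultimately have "closedin euclidean C" using compactin_imp_closedin by blast
  thus ?thesis by simp
qed

lemma cantor_closed: "cantor_subset C \<Longrightarrow> closed C"
  unfolding cantor_subset_def
proof -
  assume "C homeomorphic middle_thirds_cantor"
  hence "compact C" using homeomorphic_compactness mtc_compact by blast
  thus "closed C" by (rule closed_of_compact)
qed




definition tern :: "(nat \<Rightarrow> bool) \<Rightarrow> real" where
  "tern b = (\<Sum>n. (if b n then 2 else 0) / 3 ^ Suc n)"

lemma tern_summable: "summable (\<lambda>n. (if b n then 2 else 0) / (3::real) ^ Suc n)"
proof (rule summable_comparison_test[where g="\<lambda>n. 2 * (1/3) ^ Suc n"])
  show "\<exists>N. \<forall>n\<ge>N. norm ((if b n then 2 else 0) / (3::real) ^ Suc n) \<le> 2 * (1/3) ^ Suc n"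
    by (auto simp: power_divide)
  show "summable (\<lambda>n. 2 * (1/3::real) ^ Suc n)"
    by (intro summable_mult summable_Suc_iff[THEN iffD2] summable_geometric) simp
qed

lemma tern_rec: "tern b = (if b 0 then 2 else 0) / 3 + tern (b \<circ> Suc) / 3"
proof -
  have "tern b = (\<Sum>n. (if b (Suc n) then 2 else 0) / (3::real) ^ Suc (Suc n)) + (if b 0 then 2 else 0) / 3"
    unfolding tern_def using suminf_split_head[OF tern_summable[of b]]
    by (simp add: suminf_split_head tern_summable)
  also have "(\<Sum>n. (if b (Suc n) then 2 else 0) / (3::real) ^ Suc (Suc n)) = tern (b \<circ> Suc) / 3"
    unfolding tern_def
    by (subst suminf_divide[OF tern_summable, symmetric]) (simp add: mult.commute)
  finally show ?thesis by simp
qed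

lemma tern_bounds: "0 \<le> tern b \<and> tern b \<le> 1"
proof -
  have "tern b \<le> (\<Sum>n. 2 * (1/3::real) ^ Suc n)"
    unfolding tern_def
    by (intro suminf_le tern_summable summable_mult summable_Suc_iff[THEN iffD2] summable_geometric)
       (auto simp: power_divide)
  also have "(\<Sum>n. 2 * (1/3::real) ^ Suc n) = 1"
  proof -
    have "(\<lambda>n. 2 * (1/3::real) ^ Suc n) = (\<lambda>n. (2/3) * (1/3) ^ n)" by (auto simp: power_divide)
    moreover have "(\<Sum>n. (2/3) * (1/3::real) ^ n) = 1"
      by (subst suminf_mult) (auto simp: suminf_geometric summable_geometric)
    ultimately show ?thesis by simp
  qed
  finally have "tern b \<le> 1" .
  moreover have "0 \<le> tern b" unfolding tern_def
    by (intro suminf_nonneg tern_summable) auto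
  ultimately show ?thesis by simp
qed

lemma tern_stage: "tern b \<in> cantor_stage k"
proof (induction k arbitrary: b)
  case 0 thus ?case using tern_bounds[of b] by simp
next
  case (Suc k)
  have "tern (b \<circ> Suc) \<in> cantor_stage k" by (rule Suc)
  thus ?case using tern_rec[of b] by (cases "b 0") auto
qed

lemma tern_mtc: "tern b \<in> middle_thirds_cantor"
  unfolding middle_thirds_cantor_def using tern_stage by blast

lemma tern_head: "tern b = tern c \<Longrightarrow> b 0 = c 0"
proof (rule ccontr)
  assume e: "tern b = tern c" and ne: "b 0 \<noteq> c 0"
  have bb: "0 \<le> tern (b \<circ> Suc) \<and> tern (b \<circ> Suc) \<le> 1" by (rule tern_bounds)
  have cb: "0 \<le> tern (c \<circ> Suc) \<and> tern (c \<circ> Suc) \<le> 1" by (rule tern_bounds)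
  show False
  proof (cases "b 0")
    case True
    hence "\<not> c 0" using ne by simp
    thus False using e True tern_rec[of b] tern_rec[of c] bb cb by simp
  next
    case False
    hence "c 0" using ne by simp
    thus False using e False tern_rec[of b] tern_rec[of c] bb cb by simp
  qed
qed

lemma tern_inj: "inj tern"
proof (rule injI)
  fix b c assume "tern b = tern c"
  have "\<forall>b c. tern b = tern c \<longrightarrow> b n = c n" for n
  proof (induction n)
    case 0 thus ?case using tern_head by blast
  next
    case (Suc n)
    show ?case
    proof (intro allI impI)
      fix b c assume e: "tern b = tern c"
      hence "b 0 = c 0" by (rule tern_head)
      hence "tern (b \<circ> Suc) = tern (c \<circ> Suc)" using e tern_rec[of b] tern_rec[of c] by simp
      hence "(b \<circ> Suc) n = (c \<circ> Suc) n" using Suc by blast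
      thus "b (Suc n) = c (Suc n)" by simp
    qed
  qed
  thus "b = c" using \<open>tern b = tern c\<close> by blast
qed




lemma uncountable_natsets: "uncountable (UNIV :: nat set set)"
proof
  assume "countable (UNIV :: nat set set)"
  moreover have "(UNIV :: nat set set) \<noteq> {}" by simp
  ultimately have "\<exists>f :: nat \<Rightarrow> nat set. range f = UNIV"
    using uncountable_def[of "UNIV :: nat set set"] by metis
  then obtain f :: "nat \<Rightarrow> nat set" where "range f = UNIV" by blast
  then obtain k where "f k = {n. n \<notin> f n}" by (metis UNIV_I imageE)
  thus False by blast
qed

lemma low_bound:
  assumes "cantor_subset C"
  shows "|UNIV :: nat set set| \<le>o |C|"
proof -
  obtain h g where hg: "homeomorphism C middle_thirds_cantor h g"
    using assms unfolding cantor_subset_def homeomorphic_def by blast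
  define e where "e = (\<lambda>A::nat set. g (tern (\<lambda>n. n \<in> A)))"
  show ?thesis
  proof (rule card_of_ordLeqI[of e])
    show "inj_on e UNIV"
    proof (rule inj_onI)
      fix A B :: "nat set" assume "e A = e B"
      hence "h (e A) = h (e B)" by simp
      hence "tern (\<lambda>n. n \<in> A) = tern (\<lambda>n. n \<in> B)"
        using hg tern_mtc unfolding e_def homeomorphism_def by metis
      hence "(\<lambda>n. n \<in> A) = (\<lambda>n. n \<in> B)" using tern_inj by (simp add: inj_eq)
      thus "A = B" by (metis Collect_mem_eq)
    qed
    show "e a \<in> C" for a using hg tern_mtc unfolding e_def homeomorphism_def by blast
  qed
qed

definition enc :: "(nat \<Rightarrow> nat) set \<times> nat \<times> nat set \<Rightarrow> nat set" where
  "enc p = to_nat ` ((Inl \<circ> Inl) ` tree (fst p) \<union> {Inl (Inr (fst (snd p)))} \<union> Inr ` snd (snd p)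
      :: ((nat list + nat) + nat) set)"

lemma up_bound:
  "|{p :: (nat \<Rightarrow> nat) set \<times> nat \<times> nat set. cantor_subset (fst p)}| \<le>o |UNIV :: nat set set|"
proof (rule card_of_ordLeqI[of enc])
  show "inj_on enc {p. cantor_subset (fst p)}"
  proof (rule inj_onI)
    fix p q :: "(nat \<Rightarrow> nat) set \<times> nat \<times> nat set"
    assume p: "p \<in> {p. cantor_subset (fst p)}" and q: "q \<in> {p. cantor_subset (fst p)}"
      and e: "enc p = enc q"
    obtain C m B where pp: "p = (C, m, B)" by (cases p) auto
    obtain C' m' B' where qq: "q = (C', m', B')" by (cases q) auto
    let ?S = "\<lambda>C m B. ((Inl \<circ> Inl) ` tree C \<union> {Inl (Inr m)} \<union> Inr ` B
      :: ((nat list + nat) + nat) set)"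
    have S: "?S C m B = ?S C' m' B'"
      using e inj_image_eq_iff[OF inj_to_nat, of "?S C m B" "?S C' m' B'"]
      unfolding enc_def pp qq by (simp only: fst_conv snd_conv)
    have t: "tree C = tree C'"
    proof -
      have "tree C = {s. Inl (Inl s) \<in> ?S C m B}" by auto
      also have "\<dots> = {s. Inl (Inl s) \<in> ?S C' m' B'}" using S by simp
      also have "\<dots> = tree C'" by auto
      finally show ?thesis .
    qed
    have "C = C'"
      using closed_tree[OF cantor_closed, of C] closed_tree[OF cantor_closed, of C'] p q t pp qq
      by simp
    moreover have "m = m'"
    proof -
      have "Inl (Inr m) \<in> ?S C' m' B'" using S by blast
      thus ?thesis by auto
    qed
    moreover have "B = B'"
    proof -
      have "B = {n. Inr n \<in> ?S C m B}" by auto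
      also have "\<dots> = {n. Inr n \<in> ?S C' m' B'}" using S by simp
      also have "\<dots> = B'" by auto
      finally show ?thesis .
    qed
    ultimately show "p = q" using pp qq by simp
  qed
qed simp

lemma bern:
  "\<exists>f0 :: (nat \<Rightarrow> nat) \<Rightarrow> nat. \<forall>r::real. \<forall>C. cantor_subset C \<longrightarrow>
     uncountable (C \<inter> {y. real (f0 y) \<ge> r})"
proof -
  define I where "I = {p :: (nat \<Rightarrow> nat) set \<times> nat \<times> nat set. cantor_subset (fst p)}"
  have big: "|I| \<le>o |fst i|" if "i \<in> I" for i
    using up_bound low_bound[of "fst i"] that unfolding I_def
    by (blast intro: ordLeq_transitive)
  obtain x where xinj: "inj_on x I" and xin: "\<forall>i\<in>I. x i \<in> fst i"
    using inj_choice[of I fst, OF big] by blast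
  define f0 where "f0 = (\<lambda>y. if y \<in> x ` I then fst (snd (inv_into I x y)) else 0)"
  have f0x: "f0 (x i) = fst (snd i)" if "i \<in> I" for i
    using that xinj unfolding f0_def by simp
  show ?thesis
  proof (intro exI allI impI)
    fix r :: real and C assume Cc: "cantor_subset C"
    define m where "m = nat \<lceil>r\<rceil>"
    have mr: "r \<le> real m" unfolding m_def by linarith
    define J where "J = (\<lambda>B. (C, m, B)) ` (UNIV :: nat set set)"
    have JI: "J \<subseteq> I" unfolding J_def I_def using Cc by auto
    have "uncountable J"
    proof
      assume "countable J"
      moreover have "inj (\<lambda>B::nat set. (C, m, B))" by (auto simp: inj_def)
      ultimately have "countable (UNIV :: nat set set)"
        unfolding J_def by (rule countable_image_inj_on)
      thus False using uncountable_natsets by simp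
    qed
    hence "uncountable (x ` J)"
      using countable_image_inj_on inj_on_subset[OF xinj JI] by blast
    moreover have "x ` J \<subseteq> C \<inter> {y. real (f0 y) \<ge> r}"
    proof
      fix y assume "y \<in> x ` J"
      then obtain B where y: "y = x (C, m, B)" unfolding J_def by auto
      have i: "(C, m, B) \<in> I" using Cc unfolding I_def by simp
      show "y \<in> C \<inter> {y. real (f0 y) \<ge> r}"
        using xin i f0x[OF i] mr y by auto
    qed
    ultimately show "uncountable (C \<inter> {y. real (f0 y) \<ge> r})"
      using countable_subset by blast
  qed
qed




definition Gd :: "(nat \<Rightarrow> nat) \<Rightarrow> ereal" where
  "Gd y = limsup (\<lambda>s. ereal (real_of_int (from_nat (y (Suc s)) :: int)))"

definition sig :: "real list \<Rightarrow> nat" where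
  "sig l = (if l = [] then 0 else to_nat (\<lfloor>last l\<rfloor>))"

lemma run_Suc: "sig (map v [0..<Suc s]) = to_nat \<lfloor>v s\<rfloor>"
  unfolding sig_def by simp

lemma game_bounds:
  "Gd (\<lambda>t. sig (map v [0..<t])) \<le> limsup (\<lambda>t. ereal (v t)) \<and>
   limsup (\<lambda>t. ereal (v t)) \<le> Gd (\<lambda>t. sig (map v [0..<t])) + 1"
proof -
  have G: "Gd (\<lambda>t. sig (map v [0..<t])) = limsup (\<lambda>s. ereal (real_of_int \<lfloor>v s\<rfloor>))"
    unfolding Gd_def run_Suc by simp
  have 1: "limsup (\<lambda>s. ereal (real_of_int \<lfloor>v s\<rfloor>)) \<le> limsup (\<lambda>t. ereal (v t))"
    by (intro Limsup_mono always_eventually) simp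
  have "limsup (\<lambda>t. ereal (v t)) \<le> limsup (\<lambda>s. ereal (real_of_int \<lfloor>v s\<rfloor>) + 1)"
  proof (intro Limsup_mono always_eventually allI)
    fix s
    have "v s \<le> real_of_int \<lfloor>v s\<rfloor> + 1" by linarith
    hence "ereal (v s) \<le> ereal (real_of_int \<lfloor>v s\<rfloor> + 1)" by simp
    thus "ereal (v s) \<le> ereal (real_of_int \<lfloor>v s\<rfloor>) + 1" by (simp add: one_ereal_def)
  qed
  also have "\<dots> = limsup (\<lambda>s. ereal (real_of_int \<lfloor>v s\<rfloor>)) + 1"
    by (rule Limsup_add_ereal_right) simp_all
  finally show ?thesis using G 1 by simp
qed

lemma dodge:
  fixes G L :: ereal and a :: nat
  assumes "G \<le> L" "L \<le> G + 1"
  shows "ereal (real (if G \<le> ereal (real a) \<and> ereal (real a) \<le> G + 1 then a + 2 else a)) \<noteq> L"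
  using assms by (cases G; cases L) auto

theorem mainTheorem13:
  shows "\<exists>f :: (nat \<Rightarrow> nat) \<Rightarrow> nat.
           I_has_winning_strategy (\<lambda>x. real (f x)) \<and>
           (\<forall>(r::real) (C :: (nat \<Rightarrow> nat) set). cantor_subset C \<longrightarrow>
              uncountable (C \<inter> {x. real (f x) \<ge> r}))"
proof -
  obtain f0 :: "(nat \<Rightarrow> nat) \<Rightarrow> nat" where f0: "\<And>r C. cantor_subset C \<Longrightarrow>
     uncountable (C \<inter> {y. real (f0 y) \<ge> r})"
    using bern by blast
  define f where "f = (\<lambda>y. if Gd y \<le> ereal (real (f0 y)) \<and> ereal (real (f0 y)) \<le> Gd y + 1
     then f0 y + 2 else f0 y)"
  have ge: "f0 y \<le> f y" for y unfolding f_def by simp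
  have win: "I_has_winning_strategy (\<lambda>x. real (f x))"
    unfolding I_has_winning_strategy_def I_winning_strategy_def II_wins_run_def
  proof (intro exI allI)
    fix v :: "nat \<Rightarrow> real"
    show "ereal (real (f (\<lambda>t. sig (map v [0..<t])))) \<noteq> limsup (\<lambda>t. ereal (v t))"
      unfolding f_def using game_bounds[of v] by (intro dodge) auto
  qed
  have "uncountable (C \<inter> {x. real (f x) \<ge> r})" if "cantor_subset C" for r C
  proof
    assume "countable (C \<inter> {x. real (f x) \<ge> r})"
    moreover have "C \<inter> {y. real (f0 y) \<ge> r} \<subseteq> C \<inter> {x. real (f x) \<ge> r}"
      using ge by (auto intro: order_trans[OF _ of_nat_mono])
    ultimately show False using f0[OF that, of r] countable_subset by blast
  qed
  thus ?thesis using win by blast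
qed

end
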